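(* For every right-most path $\gamma$ in the triangular lattice $\mathbb{T}$, $$\frac{|\gamma|-1}{6}\le|\partial^+\gamma|\le 5|\gamma|.$$
   Context: $\mathbb{T}$ is the triangular lattice in $\mathbb{C}$ (vertices $\{x+ye^{\pi i/3}:x,y\in\mathbb{Z}\}$, edges between vertices at Euclidean distance $1$). A path $\gamma=(v_0,\dots,v_n)$ has $v_{i-1},v_i$ adjacent; its length is $|\gamma|=n$. Each edge gives two oriented edges $\langle u,v\rangle,\langle v,u\rangle$ (head of $\langle u,v\rangle$ is $v$). $\gamma$ is simple if it traverses each oriented edge at most once; if $v_0=v_n$ it is a circuit and indices are mod $n$. When $v_{i-1},v_{i+1}$ are defined, the right-boundary edges at $v_i$ are the oriented edges out of $v_i$ listed counterclockwise strictly after $\langle v_i,v_{i-1}\rangle$ and strictly before $\langle v_i,v_{i+1}\rangle$ (otherwise none); their heads are the right-boundary vertices of $v_i$; $\partial^+\gamma$ is the set of all right-boundary vertices of all $v_i$. $\gamma$ is right-most if it is simple, uses no vertex of $\partial^+\gamma$, and each $v_i$ with $v_{i-1},v_{i+1}$ defined has at least one right-boundary vertex. *)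

theory Defs
  imports "HOL-Analysis.Analysis"
begin

(* Vertices of the triangular lattice T are points x + y e^{i pi/3}, x,y integers;
   we index them by the pair (x,y). *)
type_synonym tvert = "int \<times> int"

definition emb :: "tvert \<Rightarrow> complex" where
  "emb v = of_int (fst v) + of_int (snd v) * cis (pi / 3)"

definition tadj :: "tvert \<Rightarrow> tvert \<Rightarrow> bool" where
  "tadj u v \<longleftrightarrow> cmod (emb u - emb v) = 1"

(* direction index of the oriented edge <u,v>: its argument is k*pi/3, k in {0..5};
   counterclockwise order of the oriented edges out of u = increasing k (cyclically) *)
definition dir_idx :: "tvert \<Rightarrow> tvert \<Rightarrow> nat" where
  "dir_idx u v = (THE k. k < 6 \<and> emb v - emb u = cis (real k * pi / 3))"

definition is_path :: "tvert list \<Rightarrow> bool" where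
  "is_path g \<longleftrightarrow> g \<noteq> [] \<and> (\<forall>i. Suc i < length g \<longrightarrow> tadj (g ! i) (g ! Suc i))"

definition plen :: "tvert list \<Rightarrow> nat" where
  "plen g = length g - 1"

(* simple: each oriented edge traversed at most once *)
definition simple_path :: "tvert list \<Rightarrow> bool" where
  "simple_path g \<longleftrightarrow> distinct (zip g (tl g))"

definition is_circuit :: "tvert list \<Rightarrow> bool" where
  "is_circuit g \<longleftrightarrow> plen g \<ge> 1 \<and> g ! 0 = g ! plen g"

(* indices i at which v_{i-1} and v_{i+1} are both defined (for circuits, indices mod n,
   so every i < n; the index n denotes the same vertex as 0) *)
definition inner_idx :: "tvert list \<Rightarrow> nat set" where
  "inner_idx g = (if is_circuit g then {..<plen g} else {i. 0 < i \<and> i < plen g})"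

definition prev_v :: "tvert list \<Rightarrow> nat \<Rightarrow> tvert" where
  "prev_v g i = (if is_circuit g then g ! ((i + plen g - 1) mod plen g) else g ! (i - 1))"

definition next_v :: "tvert list \<Rightarrow> nat \<Rightarrow> tvert" where
  "next_v g i = (if is_circuit g then g ! ((i + 1) mod plen g) else g ! (i + 1))"

(* right-boundary vertices of v_i: heads of the oriented edges out of v_i listed
   counterclockwise strictly after <v_i,v_{i-1}> and strictly before <v_i,v_{i+1}>.
   Counterclockwise offset of direction j from the edge to v_{i-1}: (j - kp) mod 6;
   offset of the edge to v_{i+1}: in {1..6} (a full turn, 6, if v_{i+1} = v_{i-1}). *)
definition right_bdry_at :: "tvert list \<Rightarrow> nat \<Rightarrow> tvert set" where
  "right_bdry_at g i =
    (if i \<in> inner_idx g then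
       (let v = g ! i; kp = dir_idx v (prev_v g i); kn = dir_idx v (next_v g i) in
        {w. tadj v w \<and> 0 < (dir_idx v w + 6 - kp) mod 6 \<and>
             (dir_idx v w + 6 - kp) mod 6 < (kn + 11 - kp) mod 6 + 1})
     else {})"

definition right_bdry :: "tvert list \<Rightarrow> tvert set" where
  "right_bdry g = (\<Union>i\<le>plen g. right_bdry_at g i)"

definition right_most :: "tvert list \<Rightarrow> bool" where
  "right_most g \<longleftrightarrow> is_path g \<and> simple_path g \<and> set g \<inter> right_bdry g = {} \<and>
     (\<forall>i\<in>inner_idx g. right_bdry_at g i \<noteq> {})"

end

theory Submission imports Defs begin
definition dx :: "nat \<Rightarrow> int" where "dx d = [1,0,-1,-1,0,1] ! d"
definition dy :: "nat \<Rightarrow> int" where "dy d = [0,1,1,0,-1,-1] ! d"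
definition mv :: "tvert \<Rightarrow> nat \<Rightarrow> tvert" where "mv v d = (fst v + dx d, snd v + dy d)"

lemma w_eq: "cis (pi/3) = Complex (1/2) (sqrt 3 / 2)"
  by (simp add: cis.ctr cos_60 sin_60)

lemma emb_Complex: "emb v = Complex (of_int (fst v) + of_int (snd v) / 2) (of_int (snd v) * sqrt 3 / 2)"
  by (simp add: emb_def w_eq complex_eq_iff)

lemma emb_inj: "emb u = emb v \<Longrightarrow> u = v"
  by (cases u; cases v) (auto simp: emb_Complex complex_eq_iff)

lemma emb_diff: "emb u - emb v = emb (fst u - fst v, snd u - snd v)"
  by (simp add: emb_def algebra_simps)

lemma cmod_emb_sq: "(cmod (emb v))^2 = of_int ((fst v)^2 + fst v * snd v + (snd v)^2)"
proof -
  have s: "sqrt 3 * sqrt 3 = (3::real)" by simp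
  have "(cmod (emb v))^2 = (Re (emb v))^2 + (Im (emb v))^2" by (rule cmod_power2)
  also have "\<dots> = of_int ((fst v)^2 + fst v * snd v + (snd v)^2)"
    by (simp add: emb_Complex power2_eq_square algebra_simps)
  finally show ?thesis .
qed

lemma int_sol:
  fixes a b :: int
  assumes "a^2 + a*b + b^2 = 1"
  shows "(a,b) \<in> {(1,0),(0,1),(-1,1),(-1,0),(0,-1),(1,-1)}"
proof -
  have "(2*a+b)^2 + 3*b^2 = 4" using assms by (simp add: power2_eq_square algebra_simps)
  hence "b^2 \<le> 1" by (smt (verit) zero_le_power2)
  hence "\<bar>b\<bar> \<le> 1" by (simp add: abs_square_le_1)
  hence b: "b = -1 \<or> b = 0 \<or> b = 1" by auto
  have "(2*b+a)^2 + 3*a^2 = 4" using assms by (simp add: power2_eq_square algebra_simps)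
  hence "a^2 \<le> 1" by (smt (verit) zero_le_power2)
  hence "\<bar>a\<bar> \<le> 1" by (simp add: abs_square_le_1)
  hence a: "a = -1 \<or> a = 0 \<or> a = 1" by auto
  from a b assms show ?thesis by auto
qed

lemma tadj_sym: "tadj u v \<Longrightarrow> tadj v u"
  by (simp add: tadj_def norm_minus_commute)

lemma tadj_mv: assumes "tadj v w" shows "\<exists>k<6. w = mv v k"
proof -
  let ?a = "fst w - fst v" and ?b = "snd w - snd v"
  have "cmod (emb w - emb v) = 1" using assms by (simp add: tadj_def norm_minus_commute)
  hence "(cmod (emb (?a, ?b)))^2 = 1" by (simp add: emb_diff)
  hence "real_of_int (?a^2 + ?a*?b + ?b^2) = 1" unfolding cmod_emb_sq by simp
  hence "?a^2 + ?a*?b + ?b^2 = 1" by (simp only: of_int_eq_1_iff)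
  from int_sol[OF this] have "(?a,?b) \<in> {(1,0),(0,1),(-1,1),(-1,0),(0,-1),(1,-1)}" .
  thus ?thesis
    apply (simp add: mv_def dx_def dy_def prod_eq_iff)
    apply (elim disjE)
    apply (rule exI[of _ 0]; simp)
    apply (rule exI[of _ 1]; simp)
    apply (rule exI[of _ 2]; simp)
    apply (rule exI[of _ 3]; simp)
    apply (rule exI[of _ 4]; simp)
    apply (rule exI[of _ 5]; simp)
    done
qed

lemma w_sq: "cis (pi/3) * cis (pi/3) = cis (pi/3) - 1"
proof -
  have s: "sqrt 3 * sqrt 3 = (3::real)" by simp
  show ?thesis by (simp add: w_eq complex_eq_iff s)
qed

lemma cis_k: assumes "k < 6" shows "cis (real k * pi / 3) = emb (dx k, dy k)"
proof -
  let ?w = "cis (pi/3)"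
  have "cis (real k * pi / 3) = ?w ^ k" by (simp add: Complex.DeMoivre)
  moreover have "k = 0 \<or> k = 1 \<or> k = 2 \<or> k = 3 \<or> k = 4 \<or> k = 5" using assms by auto
  moreover have "?w^2 = ?w - 1" using w_sq by (simp add: power2_eq_square)
  moreover have "?w^3 = -1"
  proof -
    have "?w^3 = ?w * (?w * ?w)" by (simp add: power3_eq_cube)
    also have "\<dots> = ?w * ?w - ?w" by (simp add: w_sq algebra_simps)
    also have "\<dots> = -1" by (simp add: w_sq)
    finally show ?thesis .
  qed
  moreover have "?w^4 = -?w"
  proof -
    have "?w^4 = ?w^3 * ?w" by (simp add: power_Suc2[symmetric] del: power_Suc)
    also have "\<dots> = -?w" using \<open>?w^3 = -1\<close> by simp
    finally show ?thesis .
  qed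
  moreover have "?w^5 = 1 - ?w"
  proof -
    have "?w^5 = ?w^4 * ?w" by (simp add: power_Suc2[symmetric] del: power_Suc)
    also have "\<dots> = -(?w * ?w)" using \<open>?w^4 = -?w\<close> by simp
    also have "\<dots> = 1 - ?w" using w_sq by simp
    finally show ?thesis .
  qed
  ultimately show ?thesis by (auto simp: emb_def dx_def dy_def)
qed

lemma dxy_inj: "k < 6 \<Longrightarrow> k' < 6 \<Longrightarrow> dx k = dx k' \<Longrightarrow> dy k = dy k' \<Longrightarrow> k = k'"
  by (auto simp: dx_def dy_def less_Suc_eq numeral_eq_Suc)

lemma dir_idx_mv: assumes "k < 6" shows "dir_idx v (mv v k) = k"
  unfolding dir_idx_def
proof (rule the_equality)
  have "emb (mv v k) - emb v = emb (dx k, dy k)" by (simp add: emb_diff mv_def)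
  thus "k < 6 \<and> emb (mv v k) - emb v = cis (real k * pi / 3)" using assms cis_k by simp
next
  fix k' assume h: "k' < 6 \<and> emb (mv v k) - emb v = cis (real k' * pi / 3)"
  have "emb (mv v k) - emb v = emb (dx k, dy k)" by (simp add: emb_diff mv_def)
  hence "emb (dx k', dy k') = emb (dx k, dy k)" using h cis_k by simp
  hence "(dx k', dy k') = (dx k, dy k)" by (rule emb_inj)
  thus "k' = k" using dxy_inj h assms by auto
qed

lemma tadj_dir: assumes "tadj v w" shows "dir_idx v w < 6 \<and> w = mv v (dir_idx v w)"
proof -
  obtain k where "k < 6" "w = mv v k" using tadj_mv[OF assms] by blast
  thus ?thesis using dir_idx_mv[of k v] by simp
qed

lemma six: "(x::nat) < 6 \<Longrightarrow> x = 0 \<or> x = 1 \<or> x = 2 \<or> x = 3 \<or> x = 4 \<or> x = 5" by auto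
lemma comb0:
  fixes a c d L M :: nat
  assumes "a < 6" "c < 6" "d < 6"
   "0 < (d + 6 - a) mod 6" "(d + 6 - a) mod 6 < L"
   "0 < (d + 6 - c) mod 6" "(d + 6 - c) mod 6 < M"
   "\<not> (0 < (c + 6 - a) mod 6 \<and> (c + 6 - a) mod 6 < L)"
   "\<not> (0 < (a + 6 - c) mod 6 \<and> (a + 6 - c) mod 6 < M)"
  shows "a = c"
  using six[OF assms(1)] six[OF assms(2)] six[OF assms(3)] assms(4-)
  by (elim disjE; simp)
lemma inner_lt: "i \<in> inner_idx g \<Longrightarrow> i < plen g"
  by (auto simp: inner_idx_def split: if_splits)

lemma inner_len: "i \<in> inner_idx g \<Longrightarrow> Suc i < length g"
  using inner_lt[of i g] by (simp add: plen_def)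

definition pidx :: "tvert list \<Rightarrow> nat \<Rightarrow> nat" where
  "pidx g i = (if is_circuit g then (i + plen g - 1) mod plen g else i - 1)"

lemma pidx_props:
  assumes "i \<in> inner_idx g"
  shows "pidx g i < plen g \<and> g ! Suc (pidx g i) = g ! i \<and> prev_v g i = g ! pidx g i
         \<and> i = (if is_circuit g then Suc (pidx g i) mod plen g else Suc (pidx g i))"
proof (cases "is_circuit g")
  case True
  hence p: "plen g \<ge> 1" "g ! 0 = g ! plen g" by (auto simp: is_circuit_def)
  have i: "i < plen g" using assms True by (simp add: inner_idx_def)
  show ?thesis
  proof (cases "i = 0")
    case True
    have "(i + plen g - 1) mod plen g = plen g - 1" using True p by simp
    thus ?thesis using True p \<open>is_circuit g\<close> by (simp add: pidx_def prev_v_def)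
  next
    case False
    have "i + plen g - 1 = (i - 1) + plen g" using False by simp
    hence "(i + plen g - 1) mod plen g = ((i - 1) + plen g) mod plen g" by (simp only:)
    also have "\<dots> = (i - 1) mod plen g" by (rule mod_add_self2)
    also have "\<dots> = i - 1" using i by simp
    finally have "(i + plen g - 1) mod plen g = i - 1" .
    thus ?thesis using False i \<open>is_circuit g\<close> by (simp add: pidx_def prev_v_def)
  qed
next
  case False
  thus ?thesis using assms by (auto simp: inner_idx_def pidx_def prev_v_def)
qed

lemma next_eq:
  assumes "i \<in> inner_idx g"
  shows "next_v g i = g ! Suc i"
proof (cases "is_circuit g")
  case True
  hence p: "plen g \<ge> 1" "g ! 0 = g ! plen g" by (auto simp: is_circuit_def)
  have i: "i < plen g" using assms True by (simp add: inner_idx_def)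
  show ?thesis
  proof (cases "Suc i = plen g")
    case True thus ?thesis using p \<open>is_circuit g\<close> by (simp add: next_v_def)
  next
    case False thus ?thesis using i \<open>is_circuit g\<close> by (simp add: next_v_def)
  qed
next
  case False thus ?thesis by (simp add: next_v_def)
qed

lemma path_adj: "is_path g \<Longrightarrow> Suc k < length g \<Longrightarrow> tadj (g ! k) (g ! Suc k)"
  by (simp add: is_path_def)

lemma prev_facts:
  assumes "is_path g" "i \<in> inner_idx g"
  shows "tadj (g ! i) (prev_v g i) \<and> prev_v g i \<in> set g"
proof -
  have P: "pidx g i < plen g" "g ! Suc (pidx g i) = g ! i" "prev_v g i = g ! pidx g i"
    using pidx_props[OF assms(2)] by auto
  have L: "Suc (pidx g i) < length g" using P(1) by (simp add: plen_def)
  have "tadj (g ! pidx g i) (g ! i)" using path_adj[OF assms(1) L] P(2) by simp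
  thus ?thesis using P L tadj_sym by auto
qed

lemma next_facts:
  assumes "is_path g" "i \<in> inner_idx g"
  shows "tadj (g ! i) (next_v g i) \<and> next_v g i \<in> set g"
  using path_adj[OF assms(1) inner_len[OF assms(2)]] next_eq[OF assms(2)] inner_len[OF assms(2)]
  by auto

lemma pidx_inj:
  assumes "i \<in> inner_idx g" "j \<in> inner_idx g" "pidx g i = pidx g j"
  shows "i = j"
  using pidx_props[OF assms(1)] pidx_props[OF assms(2)] assms(3) by metis

lemma rb_at_iff:
  assumes "i \<in> inner_idx g"
  shows "w \<in> right_bdry_at g i \<longleftrightarrow> tadj (g ! i) w \<and>
     0 < (dir_idx (g!i) w + 6 - dir_idx (g!i) (prev_v g i)) mod 6 \<and>
     (dir_idx (g!i) w + 6 - dir_idx (g!i) (prev_v g i)) mod 6 <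
       (dir_idx (g!i) (next_v g i) + 11 - dir_idx (g!i) (prev_v g i)) mod 6 + 1"
  using assms by (simp add: right_bdry_at_def Let_def)

lemma rb_at_empty: "i \<notin> inner_idx g \<Longrightarrow> right_bdry_at g i = {}"
  by (simp add: right_bdry_at_def)

lemma rb_eq: "right_bdry g = (\<Union>i\<in>inner_idx g. right_bdry_at g i)"
  unfolding right_bdry_def
  using rb_at_empty[of _ g] inner_lt[of _ g] by (auto; force)

lemma rb_at_sub: "i \<in> inner_idx g \<Longrightarrow> right_bdry_at g i \<subseteq> right_bdry g"
  using rb_eq by auto

lemma zip_nth: "k < plen g \<Longrightarrow> zip g (tl g) ! k = (g ! k, g ! Suc k)"
  by (simp add: plen_def nth_tl)

lemma disj_visits:
  assumes rm: "right_most g" and i: "i \<in> inner_idx g" and j: "j \<in> inner_idx g"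
    and eq: "g ! i = g ! j" and wi: "w \<in> right_bdry_at g i" and wj: "w \<in> right_bdry_at g j"
  shows "i = j"
proof -
  have path: "is_path g" and simp: "simple_path g" and disj: "set g \<inter> right_bdry g = {}"
    using rm by (auto simp: right_most_def)
  define v where "v = g ! i"
  define a where "a = dir_idx v (prev_v g i)"
  define c where "c = dir_idx v (prev_v g j)"
  define d where "d = dir_idx v w"
  define L where "L = (dir_idx v (next_v g i) + 11 - a) mod 6 + 1"
  define M where "M = (dir_idx v (next_v g j) + 11 - c) mod 6 + 1"
  have pi: "tadj v (prev_v g i)" "prev_v g i \<in> set g" using prev_facts[OF path i] v_def by auto
  have pj: "tadj v (prev_v g j)" "prev_v g j \<in> set g" using prev_facts[OF path j] v_def eq by auto
  have wi': "tadj v w" "0 < (d + 6 - a) mod 6" "(d + 6 - a) mod 6 < L"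
    using wi[unfolded rb_at_iff[OF i]] by (auto simp: v_def a_def d_def L_def)
  have wj': "0 < (d + 6 - c) mod 6" "(d + 6 - c) mod 6 < M"
    using wj[unfolded rb_at_iff[OF j]] by (auto simp: v_def eq c_def d_def M_def)
  have "prev_v g j \<notin> right_bdry_at g i" using pj(2) rb_at_sub[OF i] disj by blast
  hence n1: "\<not> (0 < (c + 6 - a) mod 6 \<and> (c + 6 - a) mod 6 < L)"
    using pj(1) unfolding rb_at_iff[OF i] by (auto simp: v_def a_def c_def L_def)
  have "prev_v g i \<notin> right_bdry_at g j" using pi(2) rb_at_sub[OF j] disj by blast
  hence n2: "\<not> (0 < (a + 6 - c) mod 6 \<and> (a + 6 - c) mod 6 < M)"
    using pi(1) unfolding rb_at_iff[OF j] by (auto simp: v_def eq a_def c_def M_def)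
  have lt: "a < 6" "c < 6" "d < 6" using tadj_dir pi(1) pj(1) wi'(1) a_def c_def d_def by auto
  have "a = c" using comb0[OF lt wi'(2,3) wj' n1 n2] .
  hence "prev_v g i = prev_v g j" using tadj_dir[OF pi(1)] tadj_dir[OF pj(1)] a_def c_def by metis
  hence "zip g (tl g) ! pidx g i = zip g (tl g) ! pidx g j"
    using pidx_props[OF i] pidx_props[OF j] zip_nth eq by metis
  moreover have "pidx g i < length (zip g (tl g))" "pidx g j < length (zip g (tl g))"
    using pidx_props[OF i] pidx_props[OF j] by (auto simp: plen_def)
  ultimately have "pidx g i = pidx g j" using simp nth_eq_iff_index_eq
    unfolding simple_path_def by blast
  thus ?thesis using pidx_inj i j by blast
qed

lemma rb_at_sub_img:
  assumes "is_path g" "i \<in> inner_idx g"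
  shows "right_bdry_at g i \<subseteq> mv (g ! i) ` ({..<6} - {dir_idx (g ! i) (prev_v g i)})"
proof
  fix w assume w: "w \<in> right_bdry_at g i"
  hence t: "tadj (g ! i) w" and pos: "0 < (dir_idx (g!i) w + 6 - dir_idx (g!i) (prev_v g i)) mod 6"
    using rb_at_iff[OF assms(2)] by auto
  have ne: "dir_idx (g!i) w \<noteq> dir_idx (g!i) (prev_v g i)" using pos by auto
  show "w \<in> mv (g ! i) ` ({..<6} - {dir_idx (g ! i) (prev_v g i)})"
    using tadj_dir[OF t] ne by (metis DiffI image_eqI lessThan_iff singletonD)
qed

lemma card_rb_at:
  assumes "is_path g" "i \<in> inner_idx g"
  shows "card (right_bdry_at g i) \<le> 5" "finite (right_bdry_at g i)"
proof -
  have a: "dir_idx (g ! i) (prev_v g i) < 6" using tadj_dir prev_facts[OF assms] by blast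
  have "card (mv (g ! i) ` ({..<6} - {dir_idx (g ! i) (prev_v g i)})) \<le> card ({..<6::nat} - {dir_idx (g ! i) (prev_v g i)})"
    by (rule card_image_le) simp
  also have "\<dots> = 5" using a by simp
  finally show "card (right_bdry_at g i) \<le> 5"
    using card_mono[OF _ rb_at_sub_img[OF assms]] by (meson finite_Diff finite_imageI finite_lessThan le_trans)
  show "finite (right_bdry_at g i)" using rb_at_sub_img[OF assms] finite_subset by blast
qed

lemma inner_fin: "finite (inner_idx g)"
  using inner_lt by (meson finite_lessThan finite_subset lessThan_iff subsetI)

lemma card_inner: "plen g - 1 \<le> card (inner_idx g)" "card (inner_idx g) \<le> plen g"
proof -
  show "card (inner_idx g) \<le> plen g"
    using card_mono[of "{..<plen g}" "inner_idx g"] inner_lt by auto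
  show "plen g - 1 \<le> card (inner_idx g)"
  proof (cases "is_circuit g")
    case True thus ?thesis by (simp add: inner_idx_def)
  next
    case False
    hence "inner_idx g = {1..<plen g}" by (auto simp: inner_idx_def)
    thus ?thesis by simp
  qed
qed

lemma upper:
  assumes "right_most g"
  shows "card (right_bdry g) \<le> 5 * plen g"
proof -
  have path: "is_path g" using assms by (simp add: right_most_def)
  have "card (right_bdry g) \<le> (\<Sum>i\<in>inner_idx g. card (right_bdry_at g i))"
    unfolding rb_eq by (rule card_UN_le[OF inner_fin])
  also have "\<dots> \<le> (\<Sum>i\<in>inner_idx g. 5)" by (rule sum_mono) (use card_rb_at[OF path] in auto)
  also have "\<dots> \<le> 5 * plen g" using card_inner(2)[of g] by simp
  finally show ?thesis .
qed

lemma rb_fin: "is_path g \<Longrightarrow> finite (right_bdry g)"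
  unfolding rb_eq using card_rb_at(2) inner_fin by blast

lemma lower:
  assumes rm: "right_most g"
  shows "plen g - 1 \<le> 6 * card (right_bdry g)"
proof -
  have path: "is_path g" and ne: "\<forall>i\<in>inner_idx g. right_bdry_at g i \<noteq> {}"
    using rm by (auto simp: right_most_def)
  define f where "f i = (g ! i, SOME w. w \<in> right_bdry_at g i)" for i
  have fin: "snd (f i) \<in> right_bdry_at g i" if "i \<in> inner_idx g" for i
    using ne that some_in_eq unfolding f_def by auto
  have inj: "inj_on f (inner_idx g)"
  proof (rule inj_onI)
    fix i j assume i: "i \<in> inner_idx g" and j: "j \<in> inner_idx g" and e: "f i = f j"
    have "g ! i = g ! j" using e by (simp add: f_def)
    moreover have "snd (f i) \<in> right_bdry_at g i" "snd (f i) \<in> right_bdry_at g j"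
      using fin[OF i] fin[OF j] e by auto
    ultimately show "i = j" using disj_visits[OF rm i j] by blast
  qed
  have sub: "f ` inner_idx g \<subseteq> (\<Union>w\<in>right_bdry g. (\<lambda>k. (mv w k, w)) ` {..<6})"
  proof
    fix x assume "x \<in> f ` inner_idx g"
    then obtain i where i: "i \<in> inner_idx g" and x: "x = f i" by blast
    have w: "snd x \<in> right_bdry_at g i" using fin[OF i] x by simp
    hence t: "tadj (snd x) (g ! i)" using rb_at_iff[OF i] tadj_sym by blast
    have "fst x = g ! i" using x by (simp add: f_def)
    hence "x = (mv (snd x) (dir_idx (snd x) (g ! i)), snd x)" using tadj_dir[OF t]
      by (metis prod.collapse)
    moreover have "snd x \<in> right_bdry g" using w rb_at_sub[OF i] by blast
    ultimately show "x \<in> (\<Union>w\<in>right_bdry g. (\<lambda>k. (mv w k, w)) ` {..<6})"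
      using tadj_dir[OF t] by blast
  qed
  have "plen g - 1 \<le> card (inner_idx g)" by (rule card_inner(1))
  also have "\<dots> = card (f ` inner_idx g)" using card_image[OF inj] by simp
  also have "\<dots> \<le> card (\<Union>w\<in>right_bdry g. (\<lambda>k. (mv w k, w)) ` {..<6})"
    by (rule card_mono[OF _ sub]) (use rb_fin[OF path] in blast)
  also have "\<dots> \<le> (\<Sum>w\<in>right_bdry g. card ((\<lambda>k. (mv w k, w)) ` {..<6::nat}))"
    by (rule card_UN_le[OF rb_fin[OF path]])
  also have "\<dots> \<le> (\<Sum>w\<in>right_bdry g. 6)"
    by (rule sum_mono) (metis card_image_le card_lessThan finite_lessThan)
  also have "\<dots> = 6 * card (right_bdry g)" by simp
  finally show ?thesis .
qed

theorem lemma2p3: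
  fixes g :: "tvert list"
  assumes "right_most g"
  shows "(real (plen g) - 1) / 6 \<le> real (card (right_bdry g)) \<and>
         real (card (right_bdry g)) \<le> 5 * real (plen g)"
proof
  have "plen g - 1 \<le> 6 * card (right_bdry g)" by (rule lower[OF assms])
  hence "real (plen g) - 1 \<le> 6 * real (card (right_bdry g))" by linarith
  thus "(real (plen g) - 1) / 6 \<le> real (card (right_bdry g))" by simp
  have "card (right_bdry g) \<le> 5 * plen g" by (rule upper[OF assms])
  thus "real (card (right_bdry g)) \<le> 5 * real (plen g)" by linarith
qed

end
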